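(* Let $p$ be an odd prime, $a_1,a_2,a_3\in\mathbb{F}_p$, $s = 3+a_1+a_2+a_3$, and let $x=(x_1,x_2,x_3)\in\mathbb{F}_p^3$, $x\neq(0,0,0)$, be a solution of \[ x_1^2+x_2^2+x_3^2+a_1x_2x_3+a_2x_1x_3+a_3x_1x_2 = s\,x_1x_2x_3 \] with $x_i = 0$ for some index $i$ (indices modulo $3$). Then $x_{i-1}\neq 0$; put $r_i := x_{i+1}/x_{i-1}$, which satisfies $r_i^2+a_ir_i+1=0$. Let $m_k$ ($k=1,2,3$) be the map replacing $x_k$ by $-x_k + s x_{k-1}x_{k+1} - a_{k+1}x_{k-1} - a_{k-1}x_{k+1}$ and leaving the other coordinates unchanged, let $\rho = m_{i+1}\circ m_{i-1}$, and let $N$ be the order of $\rho$ as a permutation of the set of nonzero solutions with $i$-th coordinate $0$ (equivalently, the multiplicative order of $r_i^2$). Then the following are equivalent: (1) $a_i^2=4$; (2) $r_i^2=1$; (3) $N=1$; (4) $r_i = -a_i/2$; (5) $r_i^{-1} = -a_i/2$; (6) $x_{i-1} + \frac{a_i}{2}x_{i+1} = 0$; (7) $x_{i-1}^2 = x_{i+1}^2$; (8) $m_{i-1}x = x$; (9) $m_{i+1}x = x$.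
   Context: On solutions with $x_i=0$ the moves $m_{i\pm1}$ preserve the condition $x_i = 0$; $\rho$ multiplies the points of each of the two lines $x_{i+1}=r x_{i-1}$ (with $r$ a root of $r^2+a_ir+1=0$) by $r^{\pm 2}$. *)

theory Defs
  imports "HOL-Analysis.Analysis"
begin

text \<open>Points of F_p^3 are vectors of type 'a^3 indexed by the numeral type 3,
  whose ring structure gives indices modulo 3 (the index 3 coincides with 0).\<close>

definition sval :: "'a::field^3 \<Rightarrow> 'a" where
  "sval a = 3 + a$1 + a$2 + a$3"

definition markov_eq :: "'a::field^3 \<Rightarrow> 'a^3 \<Rightarrow> bool" where
  "markov_eq a x \<longleftrightarrow>
     x$1^2 + x$2^2 + x$3^2 + a$1*x$2*x$3 + a$2*x$1*x$3 + a$3*x$1*x$2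
       = sval a * x$1 * x$2 * x$3"

definition move :: "'a::field^3 \<Rightarrow> 3 \<Rightarrow> 'a^3 \<Rightarrow> 'a^3" where
  "move a k x = (\<chi> j. if j = k then
       - x$k + sval a * x$(k-1) * x$(k+1) - a$(k+1) * x$(k-1) - a$(k-1) * x$(k+1)
     else x$j)"

definition perm_order :: "('b \<Rightarrow> 'b) \<Rightarrow> 'b set \<Rightarrow> nat" where
  "perm_order f S = (LEAST n. n > 0 \<and> (\<forall>y\<in>S. (f ^^ n) y = y))"

end

theory Submission imports Defs "HOL-Number_Theory.Residues" "HOL-Combinatorics.Cycles" begin
lemma idx: fixes i :: 3 shows "i-1 \<noteq> i" "i+1 \<noteq> i" "i-1 \<noteq> i+1" "i-1-1 = i+1" "i-1+1 = i" "i+1-1 = i" "i+1+1 = i-1"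
  using exhaust_3[of i] by auto
lemma two_ne: assumes "CARD('a::field) = p" "odd p" shows "(2::'a) \<noteq> 0"
proof
  assume "(2::'a) = 0"
  hence "of_nat 2 = (0::'a)" by simp
  hence d: "CHAR('a) dvd 2" using of_nat_eq_0_iff_char_dvd by blast
  have "CHAR('a) \<noteq> 1" by simp
  have "CHAR('a) \<le> 2" using d by (simp add: dvd_imp_le)
  moreover have "CHAR('a) \<noteq> 0" using d by (metis dvd_0_left_iff zero_neq_numeral)
  ultimately have "CHAR('a) = 2" using \<open>CHAR('a) \<noteq> 1\<close> by linarith
  moreover have "CHAR('a) dvd p" using CHAR_dvd_CARD assms by metis
  ultimately show False using assms by simp
qed
lemma quad:
  fixes u v A :: "'a::field"
  assumes two: "(2::'a) \<noteq> 0" and H: "u^2 + v^2 + A*u * v = 0" and nz: "u \<noteq> 0 \<or> v \<noteq> 0"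
  shows "u \<noteq> 0" "v \<noteq> 0"
    "(A^2 = 4) = (2*u+A * v = 0)" "(A^2 = 4) = (2 * v+A*u = 0)" "(A^2 = 4) = (u^2 = v^2)"
proof -
  show u: "u \<noteq> 0" using H nz by (auto simp: power2_eq_square)
  show v: "v \<noteq> 0" using H nz by (auto simp: power2_eq_square)
  have "(2*u+A * v)^2 - (A^2-4) * v^2 = 4*(u^2+v^2+A*u * v)" by (simp add: algebra_simps power2_eq_square)
  hence E1: "(2*u+A * v)^2 = (A^2-4) * v^2" using H by simp
  have "(2 * v+A*u)^2 - (A^2-4)*u^2 = 4*(u^2+v^2+A*u * v)" by (simp add: algebra_simps power2_eq_square)
  hence E2: "(2 * v+A*u)^2 = (A^2-4)*u^2" using H by simp
  show e1: "(A^2 = 4) = (2*u+A * v = 0)" using E1 v by auto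
  show "(A^2 = 4) = (2 * v+A*u = 0)" using E2 u by auto
  have four: "(4::'a) \<noteq> 0" using two by (metis mult_eq_0_iff numeral_Bit0_eq_double mult_2)
  show "(A^2 = 4) = (u^2 = v^2)"
  proof
    assume "A^2 = 4"
    hence a: "2*u + A * v = 0" using e1 by auto
    hence b: "2*u = -(A * v)" by (simp add: eq_neg_iff_add_eq_0)
    have "4*u^2 = (2*u)^2" by (simp add: power2_eq_square)
    also have "... = A^2 * v^2" using b by (simp add: power_mult_distrib)
    finally have "4*u^2 = 4 * v^2" using \<open>A^2 = 4\<close> by simp
    thus "u^2 = v^2" using four by simp
  next
    assume "u^2 = v^2"
    hence "u*(2*u+A * v) = u^2+v^2+A*u * v" by (simp add: algebra_simps power2_eq_square)
    hence "u*(2*u+A * v) = 0" using H by simp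
    thus "A^2 = 4" using e1 u by simp
  qed
qed
lemma finite_vec3:
  assumes "finite (UNIV :: 'a set)"
  shows "finite (UNIV :: ('a^3) set)"
proof (subst bij_betw_finite)
  show "bij_betw vec_nth UNIV (Pi (UNIV :: 3 set) (\<lambda>_. UNIV :: 'a set))"
    by (intro bij_betwI[of _ _ _ vec_lambda]) (auto simp: vec_eq_iff)
  have "finite (PiE (UNIV :: 3 set) (\<lambda>_. UNIV :: 'a set))"
    by (intro finite_PiE) (auto simp: assms)
  also have "(PiE (UNIV :: 3 set) (\<lambda>_. UNIV :: 'a set)) = Pi UNIV (\<lambda>_. UNIV)"
    by auto
  finally show "finite (Pi (UNIV :: 3 set) (\<lambda>_. UNIV :: 'a set))" .
qed

lemma move_nth: "(move a k y)$j = (if j = k then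
       - y$k + sval a * y$(k-1) * y$(k+1) - a$(k+1) * y$(k-1) - a$(k-1) * y$(k+1)
     else y$j)"
  by (simp add: move_def)

lemma move_move: "move a k (move a k y) = y"
proof -
  have "k - 1 \<noteq> k" "k + 1 \<noteq> k" using idx[of "k"] by auto
  thus ?thesis by (simp add: vec_eq_iff move_nth)
qed

lemma move_fix: "(move a k y = y) = ((move a k y)$k = y$k)"
  by (auto simp: vec_eq_iff move_nth)

lemma z3: "(0::3) = 3" "(4::3) = 1" by simp_all

lemma markov_zero:
  fixes a y :: "'a::field^3"
  assumes "markov_eq a y" "y$i = 0"
  shows "y$(i-1)^2 + y$(i+1)^2 + a$i * y$(i-1) * y$(i+1) = 0"
proof -
  consider "i = 1" | "i = 2" | "i = 3" using exhaust_3[of i] by blast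
  thus ?thesis
  proof cases
    case 1 thus ?thesis using assms by (simp add: markov_eq_def ac_simps z3)
  next
    case 2 thus ?thesis using assms by (simp add: markov_eq_def ac_simps z3)
  next
    case 3 thus ?thesis using assms by (simp add: markov_eq_def ac_simps z3)
  qed
qed

lemma nz3:
  fixes y :: "'a::field^3"
  assumes "y \<noteq> 0" "y$i = 0"
  shows "y$(i-1) \<noteq> 0 \<or> y$(i+1) \<noteq> 0"
proof (rule ccontr)
  assume "\<not> ?thesis"
  hence "y$j = 0" for j using assms(2) exhaust_3[of i] exhaust_3[of j] by (auto simp: z3)
  hence "\<forall>j. y$j = 0" by blast
  thus False using assms(1) by (simp add: vec_eq_iff)
qed
lemma negeq: "(- p - q = p) = (2*p + q = (0::'a::field))"
proof -
  have "(- p - q = p) = (- p - q - p = 0)" by (rule eq_iff_diff_eq_0)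
  also have "- p - q - p = -(2*p+q)" by (simp add: algebra_simps mult_2)
  also have "(-(2*p+q) = 0) = (2*p + q = 0)" by (rule neg_equal_0_iff_equal)
  finally show ?thesis .
qed

lemma fixlem:
  fixes a y :: "'a::field^3"
  assumes two: "(2::'a) \<noteq> 0" and m: "markov_eq a y" and nz: "y \<noteq> 0" and z: "y$i = 0"
  shows "(a$i^2 = 4) = (move a (i-1) y = y)" "(a$i^2 = 4) = (move a (i+1) y = y)"
proof -
  note Q = quad[OF two markov_zero[OF m z] nz3[OF nz z]]
  have "move a (i-1) y $ (i-1) = - y$(i-1) - a$i * y$(i+1)" using z by (simp add: move_nth idx)
  hence "(move a (i-1) y = y) = (2 * y$(i-1) + a$i * y$(i+1) = 0)" by (simp add: move_fix negeq)
  thus "(a$i^2 = 4) = (move a (i-1) y = y)" using Q(3) by simp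
  have "move a (i+1) y $ (i+1) = - y$(i+1) - a$i * y$(i-1)" using z by (simp add: move_nth idx)
  hence "(move a (i+1) y = y) = (2 * y$(i+1) + a$i * y$(i-1) = 0)" by (simp add: move_fix negeq)
  thus "(a$i^2 = 4) = (move a (i+1) y = y)" using Q(4) by simp
qed
theorem lemma2p1:
  fixes a x :: "'a::field ^ 3" and i :: 3 and p :: nat
  assumes "finite (UNIV :: 'a set)" and "CARD('a) = p" and "prime p" and "odd p"
    and "markov_eq a x" and "x \<noteq> 0" and "x$i = 0"
  shows "x$(i-1) \<noteq> 0 \<and>
    (let r = x$(i+1) / x$(i-1);
         \<rho> = move a (i+1) \<circ> move a (i-1);
         N = perm_order \<rho> {y. markov_eq a y \<and> y \<noteq> 0 \<and> y$i = 0};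
         c1 = (a$i^2 = 4);
         c2 = (r^2 = 1);
         c3 = (N = 1);
         c4 = (r = - a$i / 2);
         c5 = (inverse r = - a$i / 2);
         c6 = (x$(i-1) + a$i / 2 * x$(i+1) = 0);
         c7 = (x$(i-1)^2 = x$(i+1)^2);
         c8 = (move a (i-1) x = x);
         c9 = (move a (i+1) x = x)
     in r^2 + a$i * r + 1 = 0 \<and>
        (c1 \<longleftrightarrow> c2) \<and> (c1 \<longleftrightarrow> c3) \<and> (c1 \<longleftrightarrow> c4) \<and> (c1 \<longleftrightarrow> c5) \<and>
        (c1 \<longleftrightarrow> c6) \<and> (c1 \<longleftrightarrow> c7) \<and> (c1 \<longleftrightarrow> c8) \<and> (c1 \<longleftrightarrow> c9))"
proof -
  define u where "u = x$(i-1)"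
  define v where "v = x$(i+1)"
  define A where "A = a$i"
  have two: "(2::'a) \<noteq> 0" using two_ne assms(2,4) by blast
  have H: "u^2 + v^2 + A*u * v = 0" using markov_zero[OF assms(5,7)] by (simp add: u_def v_def A_def)
  have nz: "u \<noteq> 0 \<or> v \<noteq> 0" using nz3[OF assms(6,7)] by (simp add: u_def v_def)
  note Q = quad[OF two H nz]
  note F = fixlem[OF two assms(5,6,7)]
  define r where "r = v / u"
  define \<rho> where "\<rho> = move a (i+1) \<circ> move a (i-1)"
  define S where "S = {y. markov_eq a y \<and> y \<noteq> 0 \<and> y$i = 0}"
  define N where "N = perm_order \<rho> S"
  have r1: "r^2 + A * r + 1 = 0"
  proof -
    have "r^2 + A * r + 1 = (u^2 + v^2 + A*u * v) / u^2" using Q(1)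
      by (simp add: r_def field_simps power2_eq_square)
    thus ?thesis using H by simp
  qed
  have c2: "(A^2 = 4) = (r^2 = 1)"
  proof -
    have "(r^2 = 1) = (v^2 = u^2)" using Q(1) by (simp add: r_def power_divide)
    thus ?thesis using Q(5) by auto
  qed
  have c4: "(A^2 = 4) = (r = - A / 2)"
  proof -
    have "(r = - A / 2) = (2 * v + A * u = 0)" using Q(1) two
      by (simp add: r_def field_simps eq_neg_iff_add_eq_0)
    thus ?thesis using Q(4) by simp
  qed
  have c5: "(A^2 = 4) = (inverse r = - A / 2)"
  proof -
    have "(inverse r = - A / 2) = (2 * u + A * v = 0)" using Q(1,2) two
      by (simp add: r_def field_simps eq_neg_iff_add_eq_0)
    thus ?thesis using Q(3) by simp
  qed
  have c6: "(A^2 = 4) = (u + A / 2 * v = 0)"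
  proof -
    have "(u + A / 2 * v = 0) = (2 * u + A * v = 0)" using two
      by (simp add: field_simps)
    thus ?thesis using Q(3) by simp
  qed
  have fixS: "\<rho> y = y" if "A^2 = 4" "y \<in> S" for y
  proof -
    have y: "markov_eq a y" "y \<noteq> 0" "y$i = 0" using that(2) by (auto simp: S_def)
    note G = fixlem[OF two y]
    show ?thesis using G that(1) by (simp add: \<rho>_def A_def)
  qed
  have c3: "(A^2 = 4) = (N = 1)"
  proof
    assume h: "A^2 = 4"
    show "N = 1" unfolding N_def perm_order_def
      by (rule Least_equality) (use fixS[OF h] in auto)
  next
    assume hN: "N = 1"
    have "permutation \<rho>"
    proof -
      have b: "bij \<rho>"
        by (rule o_bij[where g = "move a (i-1) \<circ> move a (i+1)"])
           (auto simp: \<rho>_def fun_eq_iff move_move)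
      have "\<rho> permutes UNIV" using b by (simp add: permutes_def bij_iff)
      moreover have "finite (UNIV :: ('a^3) set)" using finite_vec3 assms(1) by blast
      ultimately show ?thesis using permutation_permutes by blast
    qed
    then obtain n where n: "\<rho> ^^ n = id" "n > 0" by (rule permutation_is_nilpotent)
    have ex: "\<exists>n. n > 0 \<and> (\<forall>y\<in>S. (\<rho> ^^ n) y = y)" using n by auto
    have "N > 0 \<and> (\<forall>y\<in>S. (\<rho> ^^ N) y = y)" unfolding N_def perm_order_def
      by (rule LeastI_ex[OF ex])
    hence "\<rho> x = x" using hN assms(5,6,7) by (auto simp: S_def)
    hence "(move a (i+1) (move a (i-1) x)) $ (i-1) = x $ (i-1)" by (simp add: \<rho>_def)
    hence "(move a (i-1) x) $ (i-1) = x $ (i-1)" using idx[of i] by (simp add: move_nth[of a "i+1"])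
    hence "move a (i-1) x = x" by (simp add: move_fix)
    thus "A^2 = 4" using F(1) by (simp add: A_def)
  qed
  show ?thesis
    unfolding Let_def
    using nz Q(1) r1 c2 c3 c4 c5 c6 Q(5) F
    by (simp add: u_def v_def A_def r_def \<rho>_def S_def N_def)
qed

end
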